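(* For each integer $n\ge 0$, let $\overline{m}_o(n)$ be the number of overpartitions $\pi$ of $n$ into odd parts such that no positive integer less than $\mathrm{omoex}(\pi)$ appears as an overlined part of $\pi$, and let $\overline{M}_o(q)=\sum_{n\ge 0}\overline{m}_o(n)q^n$. Then $$\overline{M}_o(q)=\frac{(-q;q^2)_\infty}{(q;q^2)_\infty}\bigl(1-F(-q)\bigr),\qquad\text{where } F(q)=\sum_{n=1}^{\infty}\frac{(-1)^n q^{n^2}}{(q;q^2)_n}.$$
   Context: An overpartition of $n$ is a partition of $n$ (a non-increasing sequence of positive integers summing to $n$) in which the first occurrence of each distinct part value may be overlined; an overpartition into odd parts is one all of whose parts are odd. For an overpartition $\pi$ into odd parts, $\mathrm{omoex}(\pi)$ is the smallest positive odd integer that does not occur as a part of $\pi$, neither overlined nor non-overlined (the empty overpartition of $0$ has $\mathrm{omoex}=1$). Notation: $(a;q)_n=\prod_{k=0}^{n-1}(1-aq^k)$, $(a;q)_\infty=\prod_{k\ge 0}(1-aq^k)$; identities are of formal power series in $q$ (equivalently analytic for $|q|<1$). *)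

theory Defs
  imports "HOL-Analysis.Analysis" "HOL-Library.Multiset"
begin

definition qpoch :: "complex \<Rightarrow> complex \<Rightarrow> nat \<Rightarrow> complex" where
  "qpoch a q n = (\<Prod>k<n. (1 - a * q ^ k))"

definition qpoch_inf :: "complex \<Rightarrow> complex \<Rightarrow> complex" where
  "qpoch_inf a q = prodinf (\<lambda>k. 1 - a * q ^ k)"

text \<open>An overpartition of n into odd parts is a pair (M, Ov): M is the multiset of
  parts (all positive odd integers, summing to n), O is the set of part values whose
  first occurrence is overlined (so O is a subset of the distinct parts).\<close>
definition odd_overpartitions :: "nat \<Rightarrow> (nat multiset \<times> nat set) set" where
  "odd_overpartitions n = {(M, Ov). (\<forall>k \<in># M. odd k) \<and> sum_mset M = n \<and> Ov \<subseteq> set_mset M}"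

definition omoex :: "nat multiset \<Rightarrow> nat" where
  "omoex M = (LEAST k. odd k \<and> k \<notin># M)"

definition mbar_o :: "nat \<Rightarrow> nat" where
  "mbar_o n = card {(M, Ov) \<in> odd_overpartitions n. \<forall>j \<in> Ov. \<not> j < omoex M}"

definition F_series :: "complex \<Rightarrow> complex" where
  "F_series q = (\<Sum>n. (-1) ^ (n+1) * q ^ ((n+1)^2) / qpoch q (q^2) (n+1))"

end

theory Submission
  imports Defs
begin


lemma has_sum_product_complex:
  fixes f :: "'a \<Rightarrow> complex" and g :: "'b \<Rightarrow> complex"
  assumes f: "(f has_sum a) A" and g: "(g has_sum b) B"
  shows "((\<lambda>x. f (fst x) * g (snd x)) has_sum (a * b)) (A \<times> B)"
proof -
  have fa: "(\<lambda>x. norm (f x)) summable_on A" using f summable_on_iff_abs_summable_on_complex summable_on_def by blast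
  have ga: "(\<lambda>x. norm (g x)) summable_on B" using g summable_on_iff_abs_summable_on_complex summable_on_def by blast
  have "(\<lambda>x. norm (f (fst x) * g (snd x))) summable_on Sigma A (\<lambda>_. B)"
  proof (rule iffD2[OF Infinite_Sum.abs_summable_on_Sigma_iff], intro conjI ballI)
    fix x assume "x \<in> A"
    show "(\<lambda>y. norm (f (fst (x, y)) * g (snd (x, y)))) summable_on B"
      using ga by (simp add: norm_mult summable_on_cmult_right)
  next
    have "(\<lambda>x. norm (norm (f x) * infsum (\<lambda>y. norm (g y)) B)) summable_on A"
    proof -
      have nn: "infsum (\<lambda>y. norm (g y)) B \<ge> 0" by (simp add: infsum_nonneg)
      show ?thesis using summable_on_cmult_left[OF fa, of "infsum (\<lambda>y. norm (g y)) B"] nn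
        by (simp add: abs_mult)
    qed
    then show "(\<lambda>x. norm (\<Sum>\<^sub>\<infinity>y\<in>B. norm (f (fst (x, y)) * g (snd (x, y))))) summable_on A"
      by (simp add: norm_mult infsum_cmult_right')
  qed
  then have sm: "(\<lambda>x. f (fst x) * g (snd x)) summable_on A \<times> B"
    by (rule Infinite_Sum.abs_summable_summable)
  show ?thesis
  proof (rule has_sum_SigmaI[where g = "\<lambda>x. f x * b"])
    show "((\<lambda>y. f (fst (x, y)) * g (snd (x, y))) has_sum f x * b) B" for x
      using g by (simp add: has_sum_cmult_right)
    show "((\<lambda>x. f x * b) has_sum a * b) A" using f by (rule has_sum_cmult_left)
  qed (use sm in simp)
qed



lemma chain_cover:
  fixes X :: "nat \<Rightarrow> 'a set"
  assumes mono: "\<And>N. X N \<subseteq> X (Suc N)"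
  assumes "finite F" "F \<subseteq> (\<Union>N. X N)"
  shows "\<exists>N. F \<subseteq> X N"
  using assms(2,3)
proof (induction F rule: finite_induct)
  case empty then show ?case by auto
next
  case (insert x F)
  then obtain N1 N2 where "x \<in> X N1" "F \<subseteq> X N2" by auto
  moreover have "X N1 \<subseteq> X (max N1 N2)" "X N2 \<subseteq> X (max N1 N2)"
    using lift_Suc_mono_le[of X, OF mono] by auto
  ultimately show ?case by blast
qed

lemma has_sum_chain_limit:
  fixes f :: "'a \<Rightarrow> complex" and X :: "nat \<Rightarrow> 'a set"
  assumes mono: "\<And>N. X N \<subseteq> X (Suc N)"
  and fs: "\<And>N. (f has_sum s N) (X N)"
  and ns: "\<And>N. ((\<lambda>x. norm (f x)) has_sum t N) (X N)"
  and bnd: "\<And>N. t N \<le> B"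
  and lim: "s \<longlonglongrightarrow> S"
  shows "(f has_sum S) (\<Union>N. X N)"
proof -
  define U where "U = (\<Union>N. X N)"
  have monoLe: "N \<le> M \<Longrightarrow> X N \<subseteq> X M" for N M
    using lift_Suc_mono_le[of X, OF mono] by auto
  have "(\<lambda>x. norm (f x)) summable_on U"
  proof (rule iffD2[OF Infinite_Sum.abs_summable_iff_bdd_above], rule bdd_aboveI2)
    fix F assume "F \<in> {F. F \<subseteq> U \<and> finite F}"
    then have F: "finite F" "F \<subseteq> U" by auto
    then obtain N where N: "F \<subseteq> X N" using chain_cover[of X, OF mono] unfolding U_def by blast
    have "(\<Sum>x\<in>F. norm (f x)) \<le> t N"
      by (rule finite_sum_le_has_sum[OF ns F(1) N]) auto
    then show "(\<Sum>x\<in>F. norm (f x)) \<le> B" using bnd[of N] by linarith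
  qed
  then have "f summable_on U" by (rule Infinite_Sum.abs_summable_summable)
  then have hL: "(f has_sum infsum f U) U" by (rule has_sum_infsum)
  define L where "L = infsum f U"
  have "s \<longlonglongrightarrow> L"
  proof (rule LIMSEQ_I)
    fix r :: real assume r: "0 < r"
    have "\<forall>\<^sub>F Y in finite_subsets_at_top U. dist (sum f Y) L < r/2"
    proof -
      have "(sum f \<longlongrightarrow> L) (finite_subsets_at_top U)" using hL unfolding has_sum_def L_def .
      from tendstoD[OF this, of "r/2"] r show ?thesis by simp
    qed
    then obtain F0 where F0: "finite F0" "F0 \<subseteq> U"
      and P: "\<And>Y. finite Y \<Longrightarrow> F0 \<subseteq> Y \<Longrightarrow> Y \<subseteq> U \<Longrightarrow> dist (sum f Y) L < r/2"
      unfolding eventually_finite_subsets_at_top by metis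
    obtain N0 where N0: "F0 \<subseteq> X N0" using chain_cover[of X, OF mono F0(1)] F0(2) unfolding U_def by blast
    have "norm (s n - L) < r" if "n \<ge> N0" for n
    proof -
      have sub: "F0 \<subseteq> X n" using N0 monoLe[OF that] by blast
      have XU: "X n \<subseteq> U" unfolding U_def by blast
      have ev: "\<forall>\<^sub>F Y in finite_subsets_at_top (X n). dist (sum f Y) L \<le> r/2"
        unfolding eventually_finite_subsets_at_top
      proof (intro exI[of _ F0] conjI allI impI)
        fix Y assume "finite Y \<and> F0 \<subseteq> Y \<and> Y \<subseteq> X n"
        then show "dist (sum f Y) L \<le> r/2" using P[of Y] XU by fastforce
      qed (use sub F0(1) in auto)
      have tl: "((\<lambda>Y. dist (sum f Y) L) \<longlongrightarrow> dist (s n) L) (finite_subsets_at_top (X n))"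
        using fs[of n] unfolding has_sum_def by (intro tendsto_intros)
      have "dist (s n) L \<le> r/2"
        by (rule tendsto_upperbound[OF tl ev finite_subsets_at_top_neq_bot])
      then show ?thesis using r by (simp add: dist_norm)
    qed
    then show "\<exists>no. \<forall>n\<ge>no. norm (s n - L) < r" by blast
  qed
  then have "S = L" using lim by (rule LIMSEQ_unique[rotated])
  then show ?thesis using hL unfolding U_def L_def by simp
qed



lemma geom_has_sum:
  fixes x :: complex assumes "norm x < 1"
  shows "((\<lambda>k. x ^ k) has_sum (1 / (1 - x))) UNIV"
proof (rule norm_summable_imp_has_sum)
  show "summable (\<lambda>n. norm (x ^ n))" using assms by (simp add: norm_power summable_geometric)
  show "(\<lambda>k. x ^ k) sums (1 / (1 - x))" using geometric_sums[OF assms] by simp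
qed

lemma mset_split_t:
  fixes M :: "nat multiset"
  shows "filter_mset (\<lambda>x. x \<noteq> t) M + replicate_mset (count M t) t = M"
  by (rule multiset_eqI) simp

lemma sum_mset_split_t:
  fixes M :: "nat multiset"
  shows "sum_mset M = sum_mset (filter_mset (\<lambda>x. x \<noteq> t) M) + count M t * t"
proof -
  have "sum_mset M = sum_mset (filter_mset (\<lambda>x. x \<noteq> t) M + replicate_mset (count M t) t)"
    by (simp only: mset_split_t)
  also have "\<dots> = sum_mset (filter_mset (\<lambda>x. x \<noteq> t) M) + count M t * t"
    by (simp only: sum_mset.union sum_mset_replicate_mset of_nat_id)
  finally show ?thesis .
qed

lemma ms_finite:
  fixes q :: complex
  assumes q: "norm q < 1" and T: "finite T" "0 \<notin> T"
  shows "((\<lambda>M. q ^ sum_mset M) has_sum (\<Prod>t\<in>T. 1 / (1 - q ^ t))) {M. set_mset M \<subseteq> T}"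
  using T
proof (induction T rule: finite_induct)
  case empty
  have "{M. set_mset M \<subseteq> {}} = {{#}}" by auto
  then show ?case using has_sum_finite[of "{{#}}" "\<lambda>M. q ^ sum_mset M"] by simp
next
  case (insert t T)
  have t0: "t \<noteq> 0" using insert by auto
  have IH: "((\<lambda>M. q ^ sum_mset M) has_sum (\<Prod>t\<in>T. 1 / (1 - q ^ t))) {M. set_mset M \<subseteq> T}"
    using insert by auto
  have qt: "norm (q ^ t) < 1" using q t0 by (simp add: norm_power power_less_one_iff)
  have G: "((\<lambda>k. q ^ (k * t)) has_sum (1 / (1 - q ^ t))) UNIV"
  proof -
    have "(\<lambda>k. q ^ (k * t)) = (\<lambda>k. (q ^ t) ^ k)" by (rule ext) (simp add: mult.commute[of _ t] power_mult)
    then show ?thesis using geom_has_sum[OF qt] by simp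
  qed
  have P: "((\<lambda>x. q ^ sum_mset (fst x) * q ^ (snd x * t)) has_sum
      ((\<Prod>t\<in>T. 1 / (1 - q ^ t)) * (1 / (1 - q ^ t)))) ({M. set_mset M \<subseteq> T} \<times> UNIV)"
    by (rule has_sum_product_complex[OF IH G])
  define S where "S = {M. set_mset M \<subseteq> insert t T}"
  define TT where "TT = {M. set_mset M \<subseteq> T} \<times> (UNIV :: nat set)"
  define j where "j = (\<lambda>M. (filter_mset (\<lambda>x. x \<noteq> t) M, count M t))"
  define i where "i = (\<lambda>p::nat multiset \<times> nat. fst p + replicate_mset (snd p) t)"
  have c1: "\<And>a. a \<in> S \<Longrightarrow> i (j a) = a" unfolding i_def j_def using mset_split_t by simp
  have c2: "\<And>a. a \<in> S \<Longrightarrow> j a \<in> TT" unfolding S_def TT_def j_def by auto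
  have c3: "j (i b) = b" if "b \<in> TT" for b
  proof -
    from that have "t \<notin># fst b" using insert.hyps(2) unfolding TT_def by auto
    then have "filter_mset (\<lambda>x. x \<noteq> t) (fst b) = fst b" "count (fst b) t = 0"
      by (auto simp: filter_mset_eq_conv count_eq_zero_iff)
    then show ?thesis unfolding i_def j_def by (simp add: prod_eq_iff)
  qed
  have c4: "\<And>b. b \<in> TT \<Longrightarrow> i b \<in> S" unfolding i_def S_def TT_def by auto
  have c5: "q ^ sum_mset (fst (j a)) * q ^ (snd (j a) * t) = q ^ sum_mset a" for a
  proof -
    have "sum_mset a = sum_mset (filter_mset (\<lambda>x. x \<noteq> t) a) + count a t * t" by (rule sum_mset_split_t)
    then show ?thesis unfolding j_def fst_conv snd_conv by (metis power_add)
  qed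
  have eq: "((\<lambda>M. q ^ sum_mset M) has_sum ((\<Prod>t\<in>T. 1 / (1 - q ^ t)) * (1 / (1 - q ^ t)))) S =
     ((\<lambda>x. q ^ sum_mset (fst x) * q ^ (snd x * t)) has_sum ((\<Prod>t\<in>T. 1 / (1 - q ^ t)) * (1 / (1 - q ^ t)))) TT"
    by (rule has_sum_reindex_bij_witness[of S i j TT]) (use c1 c2 c3 c4 c5 in auto)
  have "((\<lambda>M. q ^ sum_mset M) has_sum ((\<Prod>t\<in>T. 1 / (1 - q ^ t)) * (1 / (1 - q ^ t))))
          {M. set_mset M \<subseteq> insert t T}"
    using eq P unfolding S_def TT_def by simp
  note hs = this
  have e: "(\<Prod>t\<in>insert t T. 1 / (1 - q ^ t)) = (\<Prod>t\<in>T. 1 / (1 - q ^ t)) * (1 / (1 - q ^ t))"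
    by (simp only: prod.insert[OF insert.hyps] mult.commute)
  show ?case unfolding e by (rule hs)
qed



lemma kb_has_sum:
  fixes x :: complex assumes x: "norm x < 1"
  shows "((\<lambda>p. x ^ fst p) has_sum ((1 + x) / (1 - x))) {p :: nat \<times> bool. snd p \<longrightarrow> 0 < fst p}"
proof -
  have A: "((\<lambda>p. x ^ fst p) has_sum (1 / (1 - x))) ((\<lambda>k. (k, False)) ` UNIV)"
    by (subst has_sum_reindex) (auto simp: inj_on_def o_def geom_has_sum[OF x])
  have "((\<lambda>k. x * x ^ k) has_sum (x * (1 / (1 - x)))) UNIV"
    by (rule has_sum_cmult_right[OF geom_has_sum[OF x]])
  then have B: "((\<lambda>p. x ^ fst p) has_sum (x * (1 / (1 - x)))) ((\<lambda>k. (Suc k, True)) ` UNIV)"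
    by (subst has_sum_reindex) (auto simp: inj_on_def o_def)
  have C: "((\<lambda>p. x ^ fst p) has_sum (1 / (1 - x) + x * (1 / (1 - x))))
     ((\<lambda>k. (k, False)) ` UNIV \<union> (\<lambda>k. (Suc k, True)) ` UNIV)"
    by (rule has_sum_Un_disjoint[OF A B]) auto
  have e1: "(\<lambda>k. (k, False)) ` UNIV \<union> (\<lambda>k. (Suc k, True)) ` UNIV = {p :: nat \<times> bool. snd p \<longrightarrow> 0 < fst p}"
  proof (rule set_eqI)
    fix p :: "nat \<times> bool"
    show "p \<in> (\<lambda>k. (k, False)) ` UNIV \<union> (\<lambda>k. (Suc k, True)) ` UNIV \<longleftrightarrow> p \<in> {p. snd p \<longrightarrow> 0 < fst p}"
    proof (cases p)
      case (Pair k b)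
      then show ?thesis by (cases b; cases k) auto
    qed
  qed
  have x1: "1 - x \<noteq> 0" using x by auto
  have e2: "1 / (1 - x) + x * (1 / (1 - x)) = (1 + x) / (1 - x)" using x1 by (simp add: field_simps)
  show ?thesis using C unfolding e1 e2 .
qed

definition OPs :: "nat set \<Rightarrow> (nat multiset \<times> nat set) set" where
  "OPs T = {p. set_mset (fst p) \<subseteq> T \<and> snd p \<subseteq> set_mset (fst p)}"

lemma op_finite:
  fixes q :: complex
  assumes q: "norm q < 1" and T: "finite T" "0 \<notin> T"
  shows "((\<lambda>p. q ^ sum_mset (fst p)) has_sum (\<Prod>t\<in>T. (1 + q ^ t) / (1 - q ^ t))) (OPs T)"
  using T
proof (induction T rule: finite_induct)
  case empty
  have "OPs {} = {({#}, {})}" by (auto simp: OPs_def)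
  then show ?case using has_sum_finite[of "{({#}, {})}" "\<lambda>p. q ^ sum_mset (fst p)"] by simp
next
  case (insert t T)
  have t0: "t \<noteq> 0" using insert by auto
  have IH: "((\<lambda>p. q ^ sum_mset (fst p)) has_sum (\<Prod>t\<in>T. (1 + q ^ t) / (1 - q ^ t))) (OPs T)"
    using insert by auto
  have qt: "norm (q ^ t) < 1" using q t0 by (simp add: norm_power power_less_one_iff)
  have G: "((\<lambda>p. q ^ (fst p * t)) has_sum ((1 + q ^ t) / (1 - q ^ t))) {p :: nat \<times> bool. snd p \<longrightarrow> 0 < fst p}"
  proof -
    have "(\<lambda>p::nat\<times>bool. q ^ (fst p * t)) = (\<lambda>p. (q ^ t) ^ fst p)" by (rule ext) (simp add: mult.commute[of _ t] power_mult)
    then show ?thesis using kb_has_sum[OF qt] by simp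
  qed
  define V where "V = (\<Prod>t\<in>T. (1 + q ^ t) / (1 - q ^ t)) * ((1 + q ^ t) / (1 - q ^ t))"
  have P: "((\<lambda>x. q ^ sum_mset (fst (fst x)) * q ^ (fst (snd x) * t)) has_sum V)
      (OPs T \<times> {p :: nat \<times> bool. snd p \<longrightarrow> 0 < fst p})"
    unfolding V_def by (rule has_sum_product_complex[OF IH G])
  define S where "S = OPs (insert t T)"
  define TT where "TT = OPs T \<times> {p :: nat \<times> bool. snd p \<longrightarrow> 0 < fst p}"
  define j where "j = (\<lambda>a::nat multiset \<times> nat set. ((filter_mset (\<lambda>x. x \<noteq> t) (fst a), snd a - {t}), (count (fst a) t, t \<in> snd a)))"
  define i where "i = (\<lambda>b::(nat multiset \<times> nat set) \<times> (nat \<times> bool).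
      (fst (fst b) + replicate_mset (fst (snd b)) t, if snd (snd b) then insert t (snd (fst b)) else snd (fst b)))"
  have c1: "i (j a) = a" if "a \<in> S" for a
  proof -
    obtain M Ov where a: "a = (M, Ov)" by (metis prod.collapse)
    have "t \<in> Ov \<Longrightarrow> insert t (Ov - {t}) = Ov" by auto
    then show ?thesis unfolding i_def j_def a fst_conv snd_conv using mset_split_t[of t M] by simp
  qed
  have c2: "j a \<in> TT" if "a \<in> S" for a
  proof -
    obtain M Ov where a: "a = (M, Ov)" by (metis prod.collapse)
    have h: "set_mset M \<subseteq> insert t T" "Ov \<subseteq> set_mset M" using that unfolding a S_def OPs_def by auto
    have "t \<in> Ov \<Longrightarrow> 0 < count M t" using h by auto
    moreover have "set_mset (filter_mset (\<lambda>x. x \<noteq> t) M) \<subseteq> T" using h by auto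
    moreover have "Ov - {t} \<subseteq> set_mset (filter_mset (\<lambda>x. x \<noteq> t) M)" using h by auto
    ultimately show ?thesis unfolding TT_def OPs_def j_def a by simp
  qed
  have c3: "j (i b) = b" if "b \<in> TT" for b
  proof -
    obtain M Ov k bb where b: "b = ((M, Ov), (k, bb))" by (metis prod.collapse)
    from that have n1: "t \<notin># M" and n2: "t \<notin> Ov" using insert.hyps(2) unfolding b TT_def OPs_def by auto
    then have "filter_mset (\<lambda>x. x \<noteq> t) M = M" "count M t = 0"
      "insert t Ov - {t} = Ov" "Ov - {t} = Ov"
      by (auto simp: filter_mset_eq_conv count_eq_zero_iff)
    then show ?thesis unfolding i_def j_def b using n2 by simp
  qed
  have c4: "i b \<in> S" if "b \<in> TT" for b
  proof -
    obtain M Ov k bb where b: "b = ((M, Ov), (k, bb))" by (metis prod.collapse)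
    have h: "set_mset M \<subseteq> T" "Ov \<subseteq> set_mset M" "bb \<longrightarrow> 0 < k" using that unfolding b TT_def OPs_def by auto
    have "set_mset (M + replicate_mset k t) \<subseteq> insert t T" using h by auto
    moreover have "(if bb then insert t Ov else Ov) \<subseteq> set_mset (M + replicate_mset k t)" using h by auto
    ultimately show ?thesis unfolding i_def S_def b OPs_def using h by auto
  qed
  have c5: "q ^ sum_mset (fst (fst (j a))) * q ^ (fst (snd (j a)) * t) = q ^ sum_mset (fst a)" for a
  proof -
    have "sum_mset (fst a) = sum_mset (filter_mset (\<lambda>x. x \<noteq> t) (fst a)) + count (fst a) t * t" by (rule sum_mset_split_t)
    then show ?thesis unfolding j_def fst_conv snd_conv by (metis power_add)
  qed
  have eq: "((\<lambda>p. q ^ sum_mset (fst p)) has_sum V) S =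
     ((\<lambda>x. q ^ sum_mset (fst (fst x)) * q ^ (fst (snd x) * t)) has_sum V) TT"
    by (rule has_sum_reindex_bij_witness[of S i j TT]) (erule c1, erule c2, erule c3, erule c4, rule c5, rule refl)
  have "((\<lambda>p. q ^ sum_mset (fst p)) has_sum V) (OPs (insert t T))"
    using eq P unfolding S_def TT_def by blast
  note hs = this
  have e: "(\<Prod>t\<in>insert t T. (1 + q ^ t) / (1 - q ^ t)) = V"
    unfolding V_def by (simp only: prod.insert[OF insert.hyps] mult.commute)
  show ?case unfolding e by (rule hs)
qed



definition Pp :: "complex \<Rightarrow> nat \<Rightarrow> complex" where
  "Pp q a = prodinf (\<lambda>j. 1 + q ^ (2*(a+j)+1))"
definition Pm :: "complex \<Rightarrow> nat \<Rightarrow> complex" where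
  "Pm q a = prodinf (\<lambda>j. 1 - q ^ (2*(a+j)+1))"
definition Tfin :: "nat \<Rightarrow> nat \<Rightarrow> nat set" where
  "Tfin a N = {t. odd t \<and> 2*a+1 \<le> t \<and> t < 2*(a+N)+1}"
definition Tinf :: "nat \<Rightarrow> nat set" where
  "Tinf a = {t. odd t \<and> 2*a+1 \<le> t}"

lemma summable_oddpow:
  fixes q :: complex assumes q: "norm q < 1"
  shows "summable (\<lambda>j. norm q ^ (2*(a+j)+1))"
proof -
  have e: "(\<lambda>j. norm q ^ (2*(a+j)+1)) = (\<lambda>j. norm q ^ (2*a+1) * (norm q ^ 2) ^ j)"
    by (rule ext) (simp add: power_add power_mult[symmetric] algebra_simps)
  have "norm (norm q ^ 2) < 1" using q by (simp add: power_less_one_iff)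
  then have "summable (\<lambda>j. (norm q ^ 2) ^ j)" by (rule summable_geometric)
  then show ?thesis unfolding e by (rule summable_mult)
qed

lemma conv_prod_c:
  fixes q c :: complex assumes q: "norm q < 1" and c: "norm c = 1"
  shows "convergent_prod (\<lambda>j. 1 + c * q ^ (2*(a+j)+1))"
proof (rule abs_convergent_prod_imp_convergent_prod, rule summable_imp_abs_convergent_prod)
  show "summable (\<lambda>j. norm (1 + c * q ^ (2*(a+j)+1) - 1))"
    using summable_oddpow[OF q, of a] c by (simp add: norm_mult norm_power)
qed

lemma conv_Pp: "norm (q::complex) < 1 \<Longrightarrow> convergent_prod (\<lambda>j. 1 + q ^ (2*(a+j)+1))"
  using conv_prod_c[of q 1 a] by simp

lemma conv_Pm: "norm (q::complex) < 1 \<Longrightarrow> convergent_prod (\<lambda>j. 1 - q ^ (2*(a+j)+1))"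
  using conv_prod_c[of q "-1" a] by simp

lemma oddpow_small: fixes q :: complex assumes "norm q < 1" shows "norm (q ^ (2*m+1)) < 1"
proof -
  have "norm q ^ (2*m+1) < 1" using assms by (subst power_less_one_iff) auto
  then show ?thesis by (simp only: norm_power)
qed

lemma oddpow_ne1: fixes q :: complex assumes "norm q < 1" shows "1 - q ^ (2*m+1) \<noteq> 0" "1 + q ^ (2*m+1) \<noteq> 0"
proof -
  have n: "norm (q ^ (2*m+1)) < 1" by (rule oddpow_small[OF assms])
  show "1 - q ^ (2*m+1) \<noteq> 0"
  proof
    assume "1 - q ^ (2*m+1) = 0" then have "q ^ (2*m+1) = 1" by simp
    then show False using n by simp
  qed
  show "1 + q ^ (2*m+1) \<noteq> 0"
  proof
    assume "1 + q ^ (2*m+1) = 0" then have "q ^ (2*m+1) = -1" by (simp add: add_eq_0_iff)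
    then show False using n by simp
  qed
qed

lemma Pm_nonzero: "norm (q::complex) < 1 \<Longrightarrow> Pm q a \<noteq> 0"
  unfolding Pm_def by (rule prodinf_nonzero[OF conv_Pm]) (assumption, rule oddpow_ne1(1))

lemma tendsto_prod_lessThan:
  fixes f :: "nat \<Rightarrow> complex"
  assumes "convergent_prod f"
  shows "(\<lambda>N. \<Prod>j<N. f j) \<longlonglongrightarrow> prodinf f"
proof -
  have "(\<lambda>n. \<Prod>i\<le>n. f i) \<longlonglongrightarrow> prodinf f" by (rule convergent_prod_LIMSEQ[OF assms])
  then have "(\<lambda>n. \<Prod>i<Suc n. f i) \<longlonglongrightarrow> prodinf f" by (simp only: lessThan_Suc_atMost)
  then show ?thesis by (rule LIMSEQ_imp_Suc)
qed

lemma Tfin_image: "Tfin a N = (\<lambda>j. 2*(a+j)+1) ` {..<N}"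
proof (rule set_eqI, rule iffI)
  fix t assume "t \<in> Tfin a N"
  then have t: "odd t" "2*a+1 \<le> t" "t < 2*(a+N)+1" unfolding Tfin_def by auto
  then obtain m where m: "t = 2*m+1" by (metis oddE)
  then have "m \<ge> a" "m < a + N" using t by auto
  then have "t = 2*(a+(m-a))+1" "m - a < N" using m by auto
  then show "t \<in> (\<lambda>j. 2*(a+j)+1) ` {..<N}" by blast
qed (auto simp: Tfin_def)

lemma prod_Tfin: "(\<Prod>t\<in>Tfin a N. g t) = (\<Prod>j<N. g (2*(a+j)+1))"
proof -
  have "inj_on (\<lambda>j. 2*(a+j)+1) {..<N}" by (auto simp: inj_on_def)
  then show ?thesis unfolding Tfin_image by (simp add: prod.reindex)
qed

lemma finite_Tfin: "finite (Tfin a N)" unfolding Tfin_image by simp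
lemma zero_Tfin: "0 \<notin> Tfin a N" unfolding Tfin_def by auto

lemma sN_lim:
  fixes q :: complex assumes q: "norm q < 1"
  shows "(\<lambda>N. \<Prod>t\<in>Tfin a N. (1 + q ^ t) / (1 - q ^ t)) \<longlonglongrightarrow> Pp q a / Pm q a"
proof -
  have e: "(\<Prod>t\<in>Tfin a N. (1 + q ^ t) / (1 - q ^ t)) =
      (\<Prod>j<N. 1 + q ^ (2*(a+j)+1)) / (\<Prod>j<N. 1 - q ^ (2*(a+j)+1))" for N
    unfolding prod_Tfin by (rule prod_dividef)
  have nz: "prodinf (\<lambda>j. 1 - q ^ (2*(a+j)+1)) \<noteq> 0" using Pm_nonzero[OF q, of a] unfolding Pm_def .
  show ?thesis unfolding e Pp_def Pm_def
    by (intro tendsto_divide tendsto_prod_lessThan conv_Pp conv_Pm q nz)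
qed

lemma OPs_mono: "OPs (Tfin a N) \<subseteq> OPs (Tfin a (Suc N))"
  unfolding OPs_def Tfin_def by auto

lemma mem_le_sum_mset: fixes M :: "nat multiset" shows "x \<in># M \<Longrightarrow> x \<le> sum_mset M"
  using sum_mset.remove[of x M] by simp

lemma OPs_Tinf: "OPs (Tinf a) = (\<Union>N. OPs (Tfin a N))"
proof (rule set_eqI, rule iffI)
  fix p assume p: "p \<in> OPs (Tinf a)"
  define N where "N = sum_mset (fst p) + 1"
  have "set_mset (fst p) \<subseteq> Tfin a N"
  proof
    fix x assume x: "x \<in> set_mset (fst p)"
    then have "x \<le> sum_mset (fst p)" using mem_le_sum_mset by blast
    then show "x \<in> Tfin a N" using p x unfolding OPs_def Tinf_def Tfin_def N_def by auto
  qed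
  then have "p \<in> OPs (Tfin a N)" using p unfolding OPs_def by auto
  then show "p \<in> (\<Union>N. OPs (Tfin a N))" by blast
qed (auto simp: OPs_def Tinf_def Tfin_def)

lemma core:
  fixes q :: complex assumes q: "norm q < 1"
  shows "((\<lambda>p. q ^ sum_mset (fst p)) has_sum (Pp q a / Pm q a)) (OPs (Tinf a))"
proof -
  define rc where "rc = complex_of_real (norm q)"
  have rc: "norm rc < 1" using q by (simp add: rc_def)
  define sr where "sr N = (\<Prod>t\<in>Tfin a N. (1 + rc ^ t) / (1 - rc ^ t))" for N
  have hr: "((\<lambda>p. rc ^ sum_mset (fst p)) has_sum sr N) (OPs (Tfin a N))" for N
    unfolding sr_def by (rule op_finite[OF rc finite_Tfin zero_Tfin])
  have ns: "((\<lambda>p. norm (q ^ sum_mset (fst p))) has_sum Re (sr N)) (OPs (Tfin a N))" for N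
  proof -
    have "((\<lambda>p. Re (rc ^ sum_mset (fst p))) has_sum Re (sr N)) (OPs (Tfin a N))"
      by (rule has_sum_Re[OF hr])
    moreover have "Re (rc ^ n) = norm (q ^ n)" for n
      unfolding rc_def by (simp add: norm_power flip: of_real_power)
    ultimately show ?thesis by simp
  qed
  have "(\<lambda>N. Re (sr N)) \<longlonglongrightarrow> Re (Pp rc a / Pm rc a)"
    unfolding sr_def by (intro tendsto_Re sN_lim rc)
  then have "Bseq (\<lambda>N. Re (sr N))" by (intro convergent_imp_Bseq convergentI)
  then obtain K where K: "\<And>N. norm (Re (sr N)) \<le> K" by (meson BseqE)
  have bnd: "Re (sr N) \<le> K" for N using K[of N] by simp
  have "((\<lambda>p. q ^ sum_mset (fst p)) has_sum (Pp q a / Pm q a)) (\<Union>N. OPs (Tfin a N))"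
    by (rule has_sum_chain_limit[OF OPs_mono op_finite[OF q finite_Tfin zero_Tfin] ns bnd sN_lim[OF q]])
  then show ?thesis unfolding OPs_Tinf .
qed



lemma filter_all: "(\<And>x. x \<in># M \<Longrightarrow> P x) \<Longrightarrow> filter_mset P M = M"
  by (rule multiset_eqI) (auto simp: count_eq_zero_iff)

lemma filter_none: "(\<And>x. x \<in># M \<Longrightarrow> \<not> P x) \<Longrightarrow> filter_mset P M = {#}"
  by simp

lemma omoex_ex: fixes M :: "nat multiset" shows "\<exists>k. odd k \<and> k \<notin># M"
proof -
  have "2 * sum_mset M + 1 \<notin># M"
  proof
    assume "2 * sum_mset M + 1 \<in># M"
    then have "2 * sum_mset M + 1 \<le> sum_mset M" by (rule mem_le_sum_mset)
    then show False by simp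
  qed
  then show ?thesis by (intro exI[of _ "2 * sum_mset M + 1"]) simp
qed

lemma omoex_prop: "odd (omoex M) \<and> omoex M \<notin># M"
  unfolding omoex_def by (rule LeastI_ex[OF omoex_ex])

lemma omoex_min: "odd j \<Longrightarrow> j < omoex M \<Longrightarrow> j \<in># M"
  unfolding omoex_def using not_less_Least by blast

lemma omoex_eq:
  assumes "odd m" "m \<notin># M" "\<And>j. odd j \<Longrightarrow> j < m \<Longrightarrow> j \<in># M"
  shows "omoex M = m"
  unfolding omoex_def
proof (rule Least_equality)
  show "odd m \<and> m \<notin># M" using assms by simp
  show "\<And>y. odd y \<and> y \<notin># M \<Longrightarrow> m \<le> y" using assms(3) by (meson not_le)
qed

definition Good :: "(nat multiset \<times> nat set) set" where
  "Good = {p. (\<forall>k\<in>#fst p. odd k) \<and> snd p \<subseteq> set_mset (fst p) \<and> (\<forall>j\<in>snd p. \<not> j < omoex (fst p))}"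

definition Goodk :: "nat \<Rightarrow> (nat multiset \<times> nat set) set" where
  "Goodk k = {p \<in> Good. omoex (fst p) = 2*k+1}"

definition base :: "nat \<Rightarrow> nat multiset" where
  "base k = mset_set (Tfin 0 k)"

lemma sum_odds: "(\<Sum>j<k. 2*j+1) = (k::nat)^2"
  by (induction k) (auto simp: power2_eq_square)

lemma sum_base: "sum_mset (base k) = k^2"
proof -
  have "sum_mset (base k) = (\<Sum>t\<in>Tfin 0 k. t)"
    unfolding base_def by (simp add: sum_unfold_sum_mset)
  also have "\<dots> = (\<Sum>j<k. 2*j+1)"
  proof -
    have "inj_on (\<lambda>j. 2*(0+j)+1) {..<k}" by (auto simp: inj_on_def)
    then show ?thesis unfolding Tfin_image by (simp add: sum.reindex)
  qed
  finally show ?thesis using sum_odds[of k] by simp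
qed

lemma Tfin0: "x \<in> Tfin 0 k \<longleftrightarrow> odd x \<and> x < 2*k+1"
proof -
  have "odd x \<Longrightarrow> 1 \<le> x" by (cases x) auto
  then show ?thesis unfolding Tfin_def by auto
qed

lemma mem_base: "x \<in># base k \<longleftrightarrow> odd x \<and> x < 2*k+1"
  unfolding base_def using finite_Tfin[of 0 k] Tfin0[of x k] by simp

lemma count_base: "count (base k) x = (if odd x \<and> x < 2*k+1 then 1 else 0)"
  unfolding base_def using finite_Tfin[of 0 k] Tfin0[of x k] by (simp add: count_mset_set')



lemma goodk:
  fixes q :: complex assumes q: "norm q < 1"
  shows "((\<lambda>p. q ^ sum_mset (fst p)) has_sum
     (q^(k^2) * ((\<Prod>t\<in>Tfin 0 k. 1/(1-q^t)) * (Pp q (k+1) / Pm q (k+1))))) (Goodk k)"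
proof -
  define A where "A = {M. set_mset M \<subseteq> Tfin 0 k}"
  define B where "B = OPs (Tinf (k+1))"
  define V where "V = q^(k^2) * ((\<Prod>t\<in>Tfin 0 k. 1/(1-q^t)) * (Pp q (k+1) / Pm q (k+1)))"
  have H1: "((\<lambda>M. q ^ sum_mset M) has_sum (\<Prod>t\<in>Tfin 0 k. 1/(1-q^t))) A"
    unfolding A_def by (rule ms_finite[OF q finite_Tfin zero_Tfin])
  have H2: "((\<lambda>p. q ^ sum_mset (fst p)) has_sum (Pp q (k+1) / Pm q (k+1))) B"
    unfolding B_def by (rule core[OF q])
  have P: "((\<lambda>x. q^(k^2) * (q ^ sum_mset (fst x) * q ^ sum_mset (fst (snd x)))) has_sum V) (A \<times> B)"
    unfolding V_def by (rule has_sum_cmult_right[OF has_sum_product_complex[OF H1 H2]])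
  define i where "i = (\<lambda>b::nat multiset \<times> (nat multiset \<times> nat set). (base k + fst b + fst (snd b), snd (snd b)))"
  define j where "j = (\<lambda>a::nat multiset \<times> nat set. (filter_mset (\<lambda>x. x < 2*k+1) (fst a) - base k,
       (filter_mset (\<lambda>x. 2*k+1 < x) (fst a), snd a)))"
  have wt_i: "sum_mset (fst (i b)) = k^2 + sum_mset (fst b) + sum_mset (fst (snd b))" for b
    unfolding i_def by (simp add: sum_base)
  have c1: "i (j a) = a" if a: "a \<in> Goodk k" for a
  proof -
    obtain M Ov where aM: "a = (M, Ov)" by (metis prod.collapse)
    have oddM: "\<And>x. x \<in># M \<Longrightarrow> odd x" and om: "omoex M = 2*k+1"
      using a unfolding aM Goodk_def Good_def by auto
    have n1: "count M (2*k+1) = 0" using omoex_prop[of M] om by (simp add: count_eq_zero_iff)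
    have n2: "count M x = 0" if "even x" for x using oddM[of x] that by (auto simp: count_eq_zero_iff)
    have n3: "count M x \<ge> 1" if "odd x" "x < 2*k+1" for x
      using omoex_min[of x M] that om by (simp add: Suc_le_eq)
    have "base k + (filter_mset (\<lambda>x. x < 2*k+1) M - base k) + filter_mset (\<lambda>x. 2*k+1 < x) M = M"
    proof (rule multiset_eqI)
      fix x
      show "count (base k + (filter_mset (\<lambda>x. x < 2*k+1) M - base k) + filter_mset (\<lambda>x. 2*k+1 < x) M) x = count M x"
      proof (cases x "2*k+1" rule: linorder_cases)
        case less
        then show ?thesis
        proof (cases "odd x")
          case True then show ?thesis using less n3[of x] by (simp add: count_base)
        next
          case False then show ?thesis using less n2[of x] by (simp add: count_base)
        qed
      next
        case equal then show ?thesis using n1 by (simp add: count_base)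
      next
        case greater then show ?thesis by (simp add: count_base)
      qed
    qed
    then show ?thesis unfolding i_def j_def aM by simp
  qed
  have c2: "j a \<in> A \<times> B" if a: "a \<in> Goodk k" for a
  proof -
    obtain M Ov where aM: "a = (M, Ov)" by (metis prod.collapse)
    have oddM: "\<And>x. x \<in># M \<Longrightarrow> odd x" and om: "omoex M = 2*k+1" and OvM: "Ov \<subseteq> set_mset M"
      and Ovge: "\<And>y. y \<in> Ov \<Longrightarrow> \<not> y < 2*k+1"
      using a unfolding aM Goodk_def Good_def by auto
    have n1: "2*k+1 \<notin># M" using omoex_prop[of M] om by simp
    have s1: "set_mset (filter_mset (\<lambda>x. x < 2*k+1) M - base k) \<subseteq> Tfin 0 k"
    proof
      fix x assume "x \<in> set_mset (filter_mset (\<lambda>x. x < 2*k+1) M - base k)"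
      then have "x \<in># filter_mset (\<lambda>x. x < 2*k+1) M" by (meson in_diffD)
      then show "x \<in> Tfin 0 k" using oddM by (simp add: Tfin0)
    qed
    have s2: "set_mset (filter_mset (\<lambda>x. 2*k+1 < x) M) \<subseteq> Tinf (k+1)"
    proof
      fix x assume "x \<in> set_mset (filter_mset (\<lambda>x. 2*k+1 < x) M)"
      then have "x \<in># M" "2*k+1 < x" by auto
      moreover have "odd x" using oddM calculation(1) by blast
      ultimately have "2*(k+1)+1 \<le> x" by (auto elim!: oddE)
      then show "x \<in> Tinf (k+1)" using \<open>odd x\<close> by (simp add: Tinf_def)
    qed
    have s3: "Ov \<subseteq> set_mset (filter_mset (\<lambda>x. 2*k+1 < x) M)"
    proof
      fix y assume y: "y \<in> Ov"
      then have "y \<in># M" using OvM by blast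
      moreover have "y \<noteq> 2*k+1" using n1 calculation by blast
      ultimately show "y \<in> set_mset (filter_mset (\<lambda>x. 2*k+1 < x) M)" using Ovge[OF y] by simp
    qed
    show ?thesis unfolding j_def aM A_def B_def OPs_def using s1 s2 s3 by simp
  qed
  have c3: "j (i b) = b" if b: "b \<in> A \<times> B" for b
  proof -
    obtain M1 M2 Ov where bM: "b = (M1, (M2, Ov))" by (metis prod.collapse)
    have m1: "\<And>x. x \<in># M1 \<Longrightarrow> odd x \<and> x < 2*k+1" using b unfolding bM A_def by (auto simp: Tfin0)
    have m2: "\<And>x. x \<in># M2 \<Longrightarrow> odd x \<and> 2*(k+1)+1 \<le> x" using b unfolding bM B_def OPs_def Tinf_def by auto
    have f1: "filter_mset (\<lambda>x. x < 2*k+1) (base k) = base k" by (rule filter_all) (simp add: mem_base)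
    have f2: "filter_mset (\<lambda>x. x < 2*k+1) M1 = M1" by (rule filter_all) (auto dest: m1)
    have f3: "filter_mset (\<lambda>x. x < 2*k+1) M2 = {#}" by (rule filter_none) (auto dest: m2)
    have f4: "filter_mset (\<lambda>x. 2*k+1 < x) (base k) = {#}" by (rule filter_none) (simp add: mem_base)
    have f5: "filter_mset (\<lambda>x. 2*k+1 < x) M1 = {#}" by (rule filter_none) (auto dest: m1)
    have f6: "filter_mset (\<lambda>x. 2*k+1 < x) M2 = M2" by (rule filter_all) (auto dest: m2)
    show ?thesis unfolding i_def j_def bM fst_conv snd_conv filter_union_mset f1 f2 f3 f4 f5 f6 by simp
  qed
  have c4: "i b \<in> Goodk k" if b: "b \<in> A \<times> B" for b
  proof -
    obtain M1 M2 Ov where bM: "b = (M1, (M2, Ov))" by (metis prod.collapse)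
    have m1: "\<And>x. x \<in># M1 \<Longrightarrow> odd x \<and> x < 2*k+1" using b unfolding bM A_def by (auto simp: Tfin0)
    have m2: "\<And>x. x \<in># M2 \<Longrightarrow> odd x \<and> 2*(k+1)+1 \<le> x" using b unfolding bM B_def OPs_def Tinf_def by auto
    have ov: "Ov \<subseteq> set_mset M2" using b unfolding bM B_def OPs_def by auto
    define M where "M = base k + M1 + M2"
    have om: "omoex M = 2*k+1"
    proof (rule omoex_eq)
      show "odd (2*k+1)" by simp
      show "2*k+1 \<notin># M" unfolding M_def by (auto simp: mem_base dest: m1 m2)
      show "\<And>j. odd j \<Longrightarrow> j < 2*k+1 \<Longrightarrow> j \<in># M" unfolding M_def by (simp add: mem_base)
    qed
    have "\<forall>x\<in>#M. odd x" unfolding M_def by (auto simp: mem_base dest: m1 m2)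
    moreover have "Ov \<subseteq> set_mset M" unfolding M_def using ov by auto
    moreover have "\<forall>y\<in>Ov. \<not> y < omoex M"
    proof
      fix y assume "y \<in> Ov"
      then have "y \<in># M2" using ov by blast
      then show "\<not> y < omoex M" using m2[of y] om by simp
    qed
    ultimately have "(M, Ov) \<in> Goodk k" unfolding Goodk_def Good_def using om by simp
    moreover have "i b = (M, Ov)" unfolding i_def bM M_def by simp
    ultimately show ?thesis by simp
  qed
  have c5: "q^(k^2) * (q ^ sum_mset (fst (j a)) * q ^ sum_mset (fst (snd (j a)))) = q ^ sum_mset (fst a)"
    if a: "a \<in> Goodk k" for a
  proof -
    have "q ^ sum_mset (fst a) = q ^ sum_mset (fst (i (j a)))" using c1[OF a] by simp
    also have "\<dots> = q^(k^2) * (q ^ sum_mset (fst (j a)) * q ^ sum_mset (fst (snd (j a))))"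
      unfolding wt_i by (simp add: power_add)
    finally show ?thesis by simp
  qed
  have eq: "((\<lambda>p. q ^ sum_mset (fst p)) has_sum V) (Goodk k) =
     ((\<lambda>x. q^(k^2) * (q ^ sum_mset (fst x) * q ^ sum_mset (fst (snd x)))) has_sum V) (A \<times> B)"
    by (rule has_sum_reindex_bij_witness[of "Goodk k" i j "A \<times> B"])
       (erule c1, erule c2, erule c3, erule c4, erule c5, rule refl)
  show ?thesis using eq P unfolding V_def by blast
qed



definition Dq :: "complex \<Rightarrow> nat \<Rightarrow> complex" where "Dq q n = (\<Prod>j<n. 1 + q ^ (2*j+1))"
definition Qq :: "complex \<Rightarrow> nat \<Rightarrow> complex" where "Qq q n = (\<Prod>j<n. 1 - q ^ (2*j+1))"
definition aa :: "complex \<Rightarrow> nat \<Rightarrow> complex" where "aa q k = q ^ (k^2) / Dq q k"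

lemma oddpow_eq: fixes q :: complex shows "q * (q^2)^j = q^(2*j+1)"
  by (simp add: power_mult)

lemma qpoch_Q: "qpoch q (q^2) n = Qq q n"
  unfolding qpoch_def Qq_def by (rule prod.cong[OF refl]) (simp only: oddpow_eq)

lemma qpoch_D': "qpoch (-q) (q^2) n = Dq q n"
  unfolding qpoch_def Dq_def by (rule prod.cong[OF refl]) (simp only: mult_minus_left diff_minus_eq_add oddpow_eq)

lemma qpoch_D: "qpoch (-q) ((-q)^2) n = Dq q n"
  using qpoch_D'[of q n] by simp

lemma Qq_nz: "norm q < 1 \<Longrightarrow> Qq q n \<noteq> 0"
  unfolding Qq_def using oddpow_ne1(1) by (simp add: prod_zero_iff)
lemma Dq_nz: "norm q < 1 \<Longrightarrow> Dq q n \<noteq> 0"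
  unfolding Dq_def using oddpow_ne1(2) by (simp add: prod_zero_iff)

lemma prod_inv_Tfin: "(\<Prod>t\<in>Tfin 0 k. 1/(1-q^t)) = 1 / Qq q k"
  unfolding prod_Tfin Qq_def by (simp add: prod_dividef)

lemma Pp0: "Pp q 0 = qpoch_inf (-q) (q^2)"
  unfolding Pp_def qpoch_inf_def
  by (rule prodinf_cong) (simp only: mult_minus_left diff_minus_eq_add oddpow_eq add_0)

lemma Pm0: "Pm q 0 = qpoch_inf q (q^2)"
  unfolding Pm_def qpoch_inf_def
  by (rule prodinf_cong) (simp only: oddpow_eq add_0)

lemma Pp_split:
  fixes q :: complex assumes q: "norm q < 1"
  shows "Pp q 0 = Pp q n * Dq q n"
proof -
  have "Pp q 0 = (\<Prod>i. 1 + q ^ (2*(0+(i+n))+1)) * (\<Prod>i<n. 1 + q ^ (2*(0+i)+1))"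
    unfolding Pp_def
    by (rule prodinf_split_initial_segment[OF conv_Pp[OF q]]) (rule oddpow_ne1(2)[OF q])
  also have "(\<Prod>i. 1 + q ^ (2*(0+(i+n))+1)) = Pp q n"
    unfolding Pp_def by (rule prodinf_cong) (simp add: add.commute)
  finally show ?thesis by (simp add: Dq_def)
qed

lemma Pm_split:
  fixes q :: complex assumes q: "norm q < 1"
  shows "Pm q 0 = Pm q n * Qq q n"
proof -
  have "Pm q 0 = (\<Prod>i. 1 - q ^ (2*(0+(i+n))+1)) * (\<Prod>i<n. 1 - q ^ (2*(0+i)+1))"
    unfolding Pm_def
    by (rule prodinf_split_initial_segment[OF conv_Pm[OF q]]) (rule oddpow_ne1(1)[OF q])
  also have "(\<Prod>i. 1 - q ^ (2*(0+(i+n))+1)) = Pm q n"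
    unfolding Pm_def by (rule prodinf_cong) (simp add: add.commute)
  finally show ?thesis by (simp add: Qq_def)
qed

lemma alg1: fixes D c x :: complex assumes "D \<noteq> 0" "1 + x \<noteq> 0"
  shows "c / D - 2 * (c * x / (D * (1 + x))) = c * (1 - x) / (D * (1 + x))"
proof -
  have "c / D = c * (1 + x) / (D * (1 + x))" using assms by simp
  then have "c / D - 2 * (c * x / (D * (1 + x))) = (c * (1 + x) - 2 * (c * x)) / (D * (1 + x))"
    by (simp add: diff_divide_distrib)
  also have "c * (1 + x) - 2 * (c * x) = c * (1 - x)" by (simp add: algebra_simps)
  finally show ?thesis .
qed
lemma alg2: fixes Q D P M c x :: complex assumes "Q \<noteq> 0" "D \<noteq> 0" "M \<noteq> 0" "1 + x \<noteq> 0" "1 - x \<noteq> 0"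
  shows "c * ((1/Q) * ((P/(D*(1+x))) / (M/(Q*(1-x))))) = P/M * (c*(1-x)/(D*(1+x)))"
proof -
  have "(P/(D*(1+x))) / (M/(Q*(1-x))) = (P*(Q*(1-x))) / ((D*(1+x))*M)" by (rule divide_divide_times_eq)
  then have "(1/Q) * ((P/(D*(1+x))) / (M/(Q*(1-x)))) = (P*(1-x)) / ((D*(1+x))*M)"
    using assms(1) by (simp add: mult.assoc mult.left_commute)
  then show ?thesis using assms by (simp add: mult.commute mult.left_commute)
qed

lemma term_identity:
  fixes q :: complex assumes q: "norm q < 1"
  shows "q^(k^2) * ((\<Prod>t\<in>Tfin 0 k. 1/(1-q^t)) * (Pp q (k+1) / Pm q (k+1)))
       = Pp q 0 / Pm q 0 * (aa q k - 2 * aa q (k+1))"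
proof -
  define x where "x = q ^ (2*k+1)"
  have x1: "1 + x \<noteq> 0" "1 - x \<noteq> 0" unfolding x_def using oddpow_ne1[OF q] by auto
  have Dk: "Dq q k \<noteq> 0" and Qk: "Qq q k \<noteq> 0" using Dq_nz[OF q] Qq_nz[OF q] by auto
  have DS: "Dq q (k+1) = Dq q k * (1 + x)" unfolding Dq_def x_def by simp
  have QS: "Qq q (k+1) = Qq q k * (1 - x)" unfolding Qq_def x_def by simp
  have nzD: "Dq q k * (1 + x) \<noteq> 0" using Dk x1 by simp
  have nzQ: "Qq q k * (1 - x) \<noteq> 0" using Qk x1 by simp
  have PpS: "Pp q (k+1) = Pp q 0 / (Dq q k * (1 + x))"
    unfolding nonzero_eq_divide_eq[OF nzD] using Pp_split[OF q, of "k+1"] DS by simp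
  have PmS: "Pm q (k+1) = Pm q 0 / (Qq q k * (1 - x))"
    unfolding nonzero_eq_divide_eq[OF nzQ] using Pm_split[OF q, of "k+1"] QS by simp
  have Pm0nz: "Pm q 0 \<noteq> 0" by (rule Pm_nonzero[OF q])
  have e2: "(k+1)^2 = k^2 + (2*k+1)" by (simp add: power2_eq_square)
  have qS: "q ^ ((k+1)^2) = q^(k^2) * x" unfolding x_def e2 by (rule power_add)
  have a1: "aa q (k+1) = q^(k^2) * x / (Dq q k * (1 + x))" unfolding aa_def qS DS ..
  have a0: "aa q k = q^(k^2) / Dq q k" unfolding aa_def ..
  define c where "c = q^(k^2)"
  have r1: "c / Dq q k - 2 * (c * x / (Dq q k * (1 + x))) = c * (1 - x) / (Dq q k * (1 + x))"
    by (rule alg1[OF Dk x1(1)])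
  have r2: "c * ((1 / Qq q k) * ((Pp q 0 / (Dq q k * (1 + x))) / (Pm q 0 / (Qq q k * (1 - x)))))
      = Pp q 0 / Pm q 0 * (c * (1 - x) / (Dq q k * (1 + x)))"
    using Qk Dk Pm0nz x1 by (rule alg2)
  have "q^(k^2) * ((\<Prod>t\<in>Tfin 0 k. 1/(1-q^t)) * (Pp q (k+1) / Pm q (k+1)))
     = c * ((1 / Qq q k) * ((Pp q 0 / (Dq q k * (1 + x))) / (Pm q 0 / (Qq q k * (1 - x)))))"
    by (simp only: prod_inv_Tfin PpS PmS c_def)
  also have "\<dots> = Pp q 0 / Pm q 0 * (c * (1 - x) / (Dq q k * (1 + x)))" by (rule r2)
  also have "\<dots> = Pp q 0 / Pm q 0 * (aa q k - 2 * aa q (k+1))"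
    by (simp only: a0 a1 c_def[symmetric] r1)
  finally show ?thesis .

qed

lemma aa_summable:
  fixes q :: complex assumes q: "norm q < 1"
  shows "summable (aa q)"
proof -
  have "(\<lambda>n. norm q ^ n) \<longlonglongrightarrow> 0" using q by (intro LIMSEQ_power_zero) simp
  then have "\<forall>\<^sub>F n in sequentially. norm q ^ n < 1/3" by (rule order_tendstoD) simp
  then obtain N where N: "\<And>n. n \<ge> N \<Longrightarrow> norm q ^ n < 1/3" by (auto simp: eventually_sequentially)
  show ?thesis
  proof (rule summable_ratio_test[where c = "1/2" and N = N])
    fix n assume n: "n \<ge> N"
    define x where "x = q ^ (2*n+1)"
    have nx: "norm x < 1/3" unfolding x_def norm_power using N[of "2*n+1"] n by simp
    have "norm (1 + x) \<ge> 1 - norm x" using norm_diff_ineq[of 1 x] by simp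
    then have n1x: "norm (1 + x) \<ge> 2/3" using nx by simp
    have "aa q (Suc n) = aa q n * (x / (1 + x))"
    proof -
      have x1: "1 + x \<noteq> 0" unfolding x_def using oddpow_ne1[OF q] by auto
      have e2: "(Suc n)^2 = n^2 + (2*n+1)" by (simp add: power2_eq_square)
      have "q ^ ((Suc n)^2) = q^(n^2) * x" unfolding x_def e2 by (rule power_add)
      moreover have "Dq q (Suc n) = Dq q n * (1 + x)" unfolding Dq_def x_def by simp
      ultimately show ?thesis unfolding aa_def using x1 by simp
    qed
    then have "norm (aa q (Suc n)) = norm (aa q n) * (norm x / norm (1 + x))" by (simp add: norm_mult norm_divide)
    also have "\<dots> \<le> norm (aa q n) * (1/2)"
    proof (rule mult_left_mono)
      have "norm x / norm (1 + x) \<le> (1/3) / (2/3)"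
        using nx n1x by (intro frac_le) auto
      then show "norm x / norm (1 + x) \<le> 1/2" by simp
    qed simp
    finally show "norm (aa q (Suc n)) \<le> 1/2 * norm (aa q n)" by simp
  qed simp
qed

lemma F_series_eq:
  fixes q :: complex assumes q: "norm q < 1"
  shows "(\<lambda>n. aa q (Suc n)) sums F_series (-q)"
proof -
  have t: "(-1) ^ (n+1) * (-q) ^ ((n+1)^2) / qpoch (-q) ((-q)^2) (n+1) = aa q (Suc n)" for n
  proof -
    define m where "m = n + 1"
    have ev: "even (m + m^2)" by (simp add: power2_eq_square)
    have "(-1) ^ m * (-q) ^ (m^2) = ((-1) ^ (m + m^2)) * q ^ (m^2)"
      by (simp add: power_minus' power_add)
    also have "\<dots> = q ^ (m^2)" using ev by simp
    finally have "(-1) ^ m * (-q) ^ (m^2) = q ^ (m^2)" .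
    then show ?thesis unfolding qpoch_D aa_def by (simp add: m_def)
  qed
  have "summable (\<lambda>n. aa q (Suc n))" using aa_summable[OF q] by (simp add: summable_Suc_iff)
  then have "(\<lambda>n. aa q (Suc n)) sums (\<Sum>n. aa q (Suc n))" by (rule summable_sums)
  moreover have "F_series (-q) = (\<Sum>n. aa q (Suc n))" unfolding F_series_def t ..
  ultimately show ?thesis by simp
qed

lemma Tk_sums:
  fixes q :: complex assumes q: "norm q < 1"
  shows "(\<lambda>k. q^(k^2) * ((\<Prod>t\<in>Tfin 0 k. 1/(1-q^t)) * (Pp q (k+1) / Pm q (k+1))))
     sums (qpoch_inf (-q) (q^2) / qpoch_inf q (q^2) * (1 - F_series (-q)))"
proof -
  define S where "S = suminf (aa q)"
  have sa: "aa q sums S" unfolding S_def using aa_summable[OF q] by (rule summable_sums)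
  have a0: "aa q 0 = 1" unfolding aa_def Dq_def by simp
  have sS: "(\<lambda>n. aa q (Suc n)) sums (S - 1)" using sa a0 sums_Suc_iff[of "aa q" "S - 1"] by simp
  have F: "F_series (-q) = S - 1" using sums_unique2[OF F_series_eq[OF q] sS] .
  have "(\<lambda>k. aa q k - 2 * aa q (k+1)) sums (S - 2 * (S - 1))"
    by (intro sums_diff sums_mult sa) (use sS in simp)
  then have S1: "(\<lambda>k. Pp q 0 / Pm q 0 * (aa q k - 2 * aa q (k+1))) sums (Pp q 0 / Pm q 0 * (S - 2 * (S - 1)))"
    by (rule sums_mult)
  have E1: "Pp q 0 / Pm q 0 * (S - 2 * (S - 1)) = qpoch_inf (-q) (q^2) / qpoch_inf q (q^2) * (1 - F_series (-q))"
    unfolding F Pp0 Pm0 by (simp add: algebra_simps)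
  have X: "(\<lambda>k. q^(k^2) * ((\<Prod>t\<in>Tfin 0 k. 1/(1-q^t)) * (Pp q (k+1) / Pm q (k+1))))
     = (\<lambda>k. Pp q 0 / Pm q 0 * (aa q k - 2 * aa q (k+1)))" by (rule ext) (rule term_identity[OF q])
  show ?thesis unfolding X E1[symmetric] by (rule S1)
qed



lemma good_summable:
  fixes q :: complex assumes q: "norm q < 1"
  shows "(\<lambda>p. q ^ sum_mset (fst p)) summable_on Good"
proof -
  define rc where "rc = complex_of_real (norm q)"
  have rc: "norm rc < 1" using q by (simp add: rc_def)
  have "(\<lambda>p. rc ^ sum_mset (fst p)) summable_on OPs (Tinf 0)"
    using core[OF rc, of 0] summable_on_def by blast
  then have "(\<lambda>p. norm (rc ^ sum_mset (fst p))) summable_on OPs (Tinf 0)"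
    by (rule summable_on_iff_abs_summable_on_complex[THEN iffD1])
  moreover have "norm (rc ^ n) = norm (q ^ n)" for n unfolding rc_def by (simp add: norm_power)
  ultimately have "(\<lambda>p. norm (q ^ sum_mset (fst p))) summable_on OPs (Tinf 0)" by simp
  moreover have "Good \<subseteq> OPs (Tinf 0)"
  proof
    fix p assume "p \<in> Good"
    then have "\<forall>k\<in>#fst p. odd k" "snd p \<subseteq> set_mset (fst p)" unfolding Good_def by auto
    moreover have "odd k \<Longrightarrow> 1 \<le> k" for k :: nat by (cases k) auto
    ultimately show "p \<in> OPs (Tinf 0)" unfolding OPs_def Tinf_def by auto
  qed
  ultimately have "(\<lambda>p. norm (q ^ sum_mset (fst p))) summable_on Good"
    by (rule summable_on_subset_banach)
  then show ?thesis by (rule Infinite_Sum.abs_summable_summable)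
qed

lemma good_sigma_k:
  fixes q :: complex assumes q: "norm q < 1"
  shows "((\<lambda>k. q^(k^2) * ((\<Prod>t\<in>Tfin 0 k. 1/(1-q^t)) * (Pp q (k+1) / Pm q (k+1))))
     has_sum infsum (\<lambda>p. q ^ sum_mset (fst p)) Good) UNIV"
proof -
  define f where "f = (\<lambda>p::nat multiset \<times> nat set. q ^ sum_mset (fst p))"
  define L where "L = infsum f Good"
  have hL: "(f has_sum L) Good" unfolding L_def f_def using good_summable[OF q] by (rule has_sum_infsum)
  define i where "i = (\<lambda>p::nat multiset \<times> nat set. (omoex (fst p) div 2, p))"
  have oo: "2 * (omoex M div 2) + 1 = omoex M" for M using omoex_prop[of M] odd_two_times_div_two_succ by blast
  have "((\<lambda>x. f (snd x)) has_sum L) (Sigma UNIV Goodk) = (f has_sum L) Good"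
  proof (rule has_sum_reindex_bij_witness[of "Sigma UNIV Goodk" i snd Good])
    show "\<And>a. a \<in> Sigma UNIV Goodk \<Longrightarrow> i (snd a) = a"
      unfolding i_def Goodk_def by auto
    show "\<And>a. a \<in> Sigma UNIV Goodk \<Longrightarrow> snd a \<in> Good" unfolding Goodk_def by auto
    show "\<And>b. b \<in> Good \<Longrightarrow> snd (i b) = b" unfolding i_def by simp
    show "\<And>b. b \<in> Good \<Longrightarrow> i b \<in> Sigma UNIV Goodk" unfolding i_def Goodk_def using oo by auto
  qed auto
  then have hS: "((\<lambda>x. f (snd x)) has_sum L) (Sigma UNIV Goodk)" using hL by simp
  show ?thesis unfolding L_def[symmetric] f_def[symmetric]
  proof (rule has_sum_Sigma'[OF hS])
    fix k :: nat
    show "((\<lambda>y. f (snd (k, y))) has_sum q^(k^2) * ((\<Prod>t\<in>Tfin 0 k. 1/(1-q^t)) * (Pp q (k+1) / Pm q (k+1)))) (Goodk k)"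
      unfolding f_def snd_conv by (rule goodk[OF q])
  qed
qed

lemma size_le_sum_mset: fixes M :: "nat multiset" shows "(\<And>x. x \<in># M \<Longrightarrow> 1 \<le> x) \<Longrightarrow> size M \<le> sum_mset M"
  by (induction M) force+

lemma finite_fib: "finite {p \<in> Good. sum_mset (fst p) = n}"
proof (rule finite_subset)
  show "{p \<in> Good. sum_mset (fst p) = n} \<subseteq> (\<Union>s\<in>{..n}. multisets_of_size {..n} s) \<times> Pow {..n}"
  proof
    fix p assume p: "p \<in> {p \<in> Good. sum_mset (fst p) = n}"
    then have od: "\<And>k. k \<in># fst p \<Longrightarrow> odd k" and ov: "snd p \<subseteq> set_mset (fst p)" and s: "sum_mset (fst p) = n"
      unfolding Good_def by auto
    have le: "\<And>x. x \<in># fst p \<Longrightarrow> x \<le> n" using mem_le_sum_mset s by blast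
    have "\<And>x. x \<in># fst p \<Longrightarrow> 1 \<le> x" using od by (metis One_nat_def Suc_leI odd_pos)
    then have "size (fst p) \<le> n" using size_le_sum_mset s by metis
    moreover have "set_mset (fst p) \<subseteq> {..n}" using le by auto
    ultimately have "fst p \<in> (\<Union>s\<in>{..n}. multisets_of_size {..n} s)" unfolding multisets_of_size_def by auto
    moreover have "snd p \<in> Pow {..n}" using ov le by auto
    ultimately show "p \<in> (\<Union>s\<in>{..n}. multisets_of_size {..n} s) \<times> Pow {..n}" by (simp add: mem_Times_iff)
  qed
qed (auto intro: finite_multisets_of_size)

lemma mbar_card: "mbar_o n = card {p \<in> Good. sum_mset (fst p) = n}"
proof -
  have "{(M, Ov) \<in> odd_overpartitions n. \<forall>j \<in> Ov. \<not> j < omoex M} = {p \<in> Good. sum_mset (fst p) = n}"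
    unfolding odd_overpartitions_def Good_def by auto
  then show ?thesis unfolding mbar_o_def by simp
qed

lemma good_sigma_n:
  fixes q :: complex assumes q: "norm q < 1"
  shows "((\<lambda>n. of_nat (mbar_o n) * q ^ n) has_sum infsum (\<lambda>p. q ^ sum_mset (fst p)) Good) UNIV"
proof -
  define f where "f = (\<lambda>p::nat multiset \<times> nat set. q ^ sum_mset (fst p))"
  define L where "L = infsum f Good"
  define Fb where "Fb n = {p \<in> Good. sum_mset (fst p) = n}" for n
  have hL: "(f has_sum L) Good" unfolding L_def f_def using good_summable[OF q] by (rule has_sum_infsum)
  define i where "i = (\<lambda>p::nat multiset \<times> nat set. (sum_mset (fst p), p))"
  have "((\<lambda>x. f (snd x)) has_sum L) (Sigma UNIV Fb) = (f has_sum L) Good"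
  proof (rule has_sum_reindex_bij_witness[of "Sigma UNIV Fb" i snd Good])
    show "\<And>a. a \<in> Sigma UNIV Fb \<Longrightarrow> i (snd a) = a" unfolding i_def Fb_def by auto
    show "\<And>a. a \<in> Sigma UNIV Fb \<Longrightarrow> snd a \<in> Good" unfolding Fb_def by auto
    show "\<And>b. b \<in> Good \<Longrightarrow> snd (i b) = b" unfolding i_def by simp
    show "\<And>b. b \<in> Good \<Longrightarrow> i b \<in> Sigma UNIV Fb" unfolding i_def Fb_def by auto
  qed auto
  then have hS: "((\<lambda>x. f (snd x)) has_sum L) (Sigma UNIV Fb)" using hL by simp
  show ?thesis unfolding L_def[symmetric] f_def[symmetric]
  proof (rule has_sum_Sigma'[OF hS])
    fix n :: nat
    have "((\<lambda>y. f y) has_sum (\<Sum>y\<in>Fb n. f y)) (Fb n)"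
      by (rule has_sum_finite) (simp add: Fb_def finite_fib)
    moreover have "(\<Sum>y\<in>Fb n. f y) = of_nat (mbar_o n) * q ^ n"
    proof -
      have "(\<Sum>y\<in>Fb n. f y) = (\<Sum>y\<in>Fb n. q ^ n)" unfolding f_def Fb_def by (rule sum.cong) auto
      then show ?thesis unfolding mbar_card Fb_def by simp
    qed
    ultimately show "((\<lambda>y. f (snd (n, y))) has_sum of_nat (mbar_o n) * q ^ n) (Fb n)" by simp
  qed
qed

theorem mainTheorem1:
  fixes q :: complex
  assumes "norm q < 1"
  shows "(\<lambda>n. of_nat (mbar_o n) * q ^ n) sums
           (qpoch_inf (-q) (q^2) / qpoch_inf q (q^2) * (1 - F_series (-q)))"
proof -
  have A: "(\<lambda>n. of_nat (mbar_o n) * q ^ n) sums infsum (\<lambda>p. q ^ sum_mset (fst p)) Good"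
    by (rule has_sum_imp_sums[OF good_sigma_n[OF assms]])
  have B: "(\<lambda>k. q^(k^2) * ((\<Prod>t\<in>Tfin 0 k. 1/(1-q^t)) * (Pp q (k+1) / Pm q (k+1))))
     sums infsum (\<lambda>p. q ^ sum_mset (fst p)) Good"
    by (rule has_sum_imp_sums[OF good_sigma_k[OF assms]])
  have "infsum (\<lambda>p. q ^ sum_mset (fst p)) Good = qpoch_inf (-q) (q^2) / qpoch_inf q (q^2) * (1 - F_series (-q))"
    by (rule sums_unique2[OF B Tk_sums[OF assms]])
  then show ?thesis using A by simp
qed

end
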